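(* Let $k$ be a positive integer and $p$ a prime with $p\equiv 3,5,$ or $7\pmod 8$. Then for every non-negative integer $n$, $\mathcal{J}_6(24n+3)\equiv \mathcal{J}_6(3p^{2k}(8n+1))\pmod 2$.
   Context: Let $q=e^{2\pi i\tau}$, $(a;q)_\infty=\prod_{j\ge0}(1-aq^j)$, and $\eta(\tau)=q^{1/24}(q;q)_\infty$. Define $$j_6(\tau)=\left(\frac{\eta(2\tau)\eta(3\tau)^3}{\eta(\tau)\eta(6\tau)^3}\right)^3-3=\frac1q+\sum_{n\ge0}\mathcal{J}_6(n)q^n.$$ *)

theory Defs
  imports "HOL-Computational_Algebra.Computational_Algebra"
begin

text \<open>(q^k;q^k)_\<infinity> = prod_{j>=1} (1 - q^(k j)) as a formal power series in q.
  Its n-th coefficient equals that of the finite product over j = 1..n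
  (for k >= 1 the remaining factors are 1 + O(q^(n+1))).\<close>
definition qpoch :: "nat \<Rightarrow> rat fps" where
  "qpoch k = Abs_fps (\<lambda>n. (\<Prod>j\<in>{1..n}. (1 - fps_X ^ (k * j))) $ n)"

text \<open>q * (j_6 + 3) = (eta(2t) eta(3t)^3 / (eta(t) eta(6t)^3))^3 * q, as power series in q
  (the q-power prefactors of the eta quotient combine to q^(-1)).\<close>
definition j6_series :: "rat fps" where
  "j6_series = (qpoch 2 * qpoch 3 ^ 3 * inverse (qpoch 1 * qpoch 6 ^ 3)) ^ 3"

text \<open>j_6 = 1/q + sum_{n>=0} J6 n q^n.\<close>
definition J6 :: "nat \<Rightarrow> rat" where
  "J6 n = j6_series $ (n + 1) - (if n = 0 then 3 else 0)"

end

theory Submission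
  imports Defs "HOL-Library.Z2"
begin

declare add_bit_eq_xor[simp del] mult_bit_eq_and[simp del]

lemma bit_add_self: "(a::bit) + a = 0"
  by (cases a) simp_all

lemma bit_mult_self: "(a::bit) * a = a"
  by (cases a) simp_all

lemma invol_sum_bit:
  fixes g :: "'a \<Rightarrow> bit"
  assumes "finite S" "\<forall>x\<in>S. \<sigma> x \<in> S \<and> \<sigma> (\<sigma> x) = x \<and> g (\<sigma> x) = g x"
  shows "(\<Sum>x\<in>S. g x) = (\<Sum>x\<in>{x\<in>S. \<sigma> x = x}. g x)"
  using assms
proof (induction "card S" arbitrary: S rule: less_induct)
  case less
  show ?case
  proof (cases "\<exists>x\<in>S. \<sigma> x \<noteq> x")
    case False
    then have "{x\<in>S. \<sigma> x = x} = S" by auto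
    then show ?thesis by simp
  next
    case True
    then obtain x where x: "x\<in>S" "\<sigma> x \<noteq> x" by auto
    define S' where "S' = S - {x, \<sigma> x}"
    have sx: "\<sigma> x \<in> S" using less.prems x by auto
    have fin': "finite S'" using less.prems by (simp add: S'_def)
    have cl: "\<forall>y\<in>S'. \<sigma> y \<in> S' \<and> \<sigma> (\<sigma> y) = y \<and> g (\<sigma> y) = g y"
    proof
      fix y assume y: "y \<in> S'"
      then have yS: "y \<in> S" "y \<noteq> x" "y \<noteq> \<sigma> x" by (auto simp: S'_def)
      have P: "\<sigma> y \<in> S" "\<sigma> (\<sigma> y) = y" "g (\<sigma> y) = g y" using less.prems(2) yS(1) by auto
      have "\<sigma> y \<noteq> x"
      proof
        assume "\<sigma> y = x" then have "\<sigma> (\<sigma> y) = \<sigma> x" by simp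
        then show False using P(2) yS(3) by simp
      qed
      moreover have "\<sigma> y \<noteq> \<sigma> x"
      proof
        assume "\<sigma> y = \<sigma> x" then have "\<sigma> (\<sigma> y) = \<sigma> (\<sigma> x)" by simp
        then show False using P(2) yS(2) less.prems(2) x(1) by simp
      qed
      ultimately show "\<sigma> y \<in> S' \<and> \<sigma> (\<sigma> y) = y \<and> g (\<sigma> y) = g y" using P by (auto simp: S'_def)
    qed
    have "card S' < card S"
      unfolding S'_def using x less.prems(1) by (intro psubset_card_mono) auto
    then have IH: "(\<Sum>y\<in>S'. g y) = (\<Sum>y\<in>{y\<in>S'. \<sigma> y = y}. g y)"
      using less.hyps fin' cl by blast
    have SS: "S = insert x (insert (\<sigma> x) S')" using x sx by (auto simp: S'_def)
    have n1: "x \<notin> insert (\<sigma> x) S'" using x(2) by (auto simp: S'_def)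
    have n2: "\<sigma> x \<notin> S'" by (auto simp: S'_def)
    have "(\<Sum>y\<in>S. g y) = g x + (g (\<sigma> x) + (\<Sum>y\<in>S'. g y))"
      by (subst SS) (simp only: sum.insert[OF finite_insert[THEN iffD2, OF fin'] n1] sum.insert[OF fin' n2])
    also have "\<dots> = (\<Sum>y\<in>S'. g y)" using less.prems x
      by (simp add: add.assoc[symmetric] bit_add_self)
    finally have E1: "(\<Sum>y\<in>S. g y) = (\<Sum>y\<in>S'. g y)" .
    have "{y\<in>S'. \<sigma> y = y} = {y\<in>S. \<sigma> y = y}"
    proof -
      have "\<sigma> (\<sigma> x) = x" using less.prems(2) x(1) by blast
      then have "\<sigma> (\<sigma> x) \<noteq> \<sigma> x" using x(2) by simp
      then show ?thesis using x(2) unfolding S'_def by auto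
    qed
    then show ?thesis using IH E1 by simp
  qed
qed


lemma compose_Xpow_nth:
  fixes f :: "'a::comm_ring_1 fps"
  assumes "k > 0"
  shows "(f oo fps_X^k) $ n = (if k dvd n then f $ (n div k) else 0)"
proof -
  have "(f oo fps_X^k) $ n = (\<Sum>i=0..n. if i = n div k \<and> k dvd n then f$i else 0)"
    unfolding fps_compose_nth power_mult[symmetric] fps_X_power_nth
    by (intro sum.cong refl) (use assms in auto)
  also have "\<dots> = (if k dvd n then f $ (n div k) else 0)"
    using assms by (cases "k dvd n") (auto simp: dvd_def)
  finally show ?thesis .
qed

lemma compose_Xpow_Xpow:
  fixes f :: "'a::idom fps"
  assumes "a > 0" "b > 0"
  shows "(f oo fps_X^a) oo fps_X^b = f oo fps_X^(a*b)"
proof -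
  have "f oo (fps_X^a oo fps_X^b) = (f oo fps_X^a) oo fps_X^b"
    by (rule fps_compose_assoc) (use assms in auto)
  moreover have "fps_X^a oo fps_X^b = (fps_X^(a*b) :: 'a fps)"
    using assms by (simp add: fps_X_power_compose power_mult[symmetric] mult.commute)
  ultimately show ?thesis by simp
qed

lemma frob:
  fixes f :: "bit fps"
  shows "f^2 = f oo fps_X^2"
proof (rule fps_ext)
  fix n
  have t1: "(f^2) $ n = (\<Sum>i\<in>{0..n}. f$i * f$(n-i))"
    by (simp add: power2_eq_square fps_mult_nth)
  have t2: "{i\<in>{0..n}. n - i = i} = {i. n = 2*(i::nat)}" by auto
  have t3: "(\<Sum>i\<in>{0..n}. f$i * f$(n-i)) = (\<Sum>i\<in>{i\<in>{0..n}. n - i = i}. f$i * f$(n-i))"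
  proof (rule invol_sum_bit[where \<sigma>="\<lambda>i. n - i"])
    show "\<forall>x\<in>{0..n}. n - x \<in> {0..n} \<and> n - (n - x) = x \<and> f$(n - x) * f$(n - (n - x)) = f$x * f$(n - x)"
    proof
      fix x assume "x \<in> {0..n}"
      then have "n - (n - x) = x" by auto
      then show "n - x \<in> {0..n} \<and> n - (n - x) = x \<and> f$(n - x) * f$(n - (n - x)) = f$x * f$(n - x)"
        by (simp only: mult.commute[of "f$(n-x)"]) simp
    qed
  qed simp
  have t4: "(\<Sum>i\<in>{i. n = 2*i}. f$i * f$(n-i)) = (f oo fps_X^2) $ n"
  proof (cases "even n")
    case True
    then obtain m where m: "n = 2*m" by (elim evenE)
    then have "{i. n = 2*i} = {m}" by auto
    then show ?thesis using m by (simp add: compose_Xpow_nth bit_mult_self)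
  next
    case False
    then have "{i. n = 2*i} = {}" by auto
    then show ?thesis using False by (simp add: compose_Xpow_nth)
  qed
  show "(f^2) $ n = (f oo fps_X^2) $ n" using t1 t2 t3 t4 by simp
qed

lemma frob4:
  fixes f :: "bit fps"
  shows "f^4 = f oo fps_X^4"
proof -
  have "f^4 = (f^2)^2" using power_mult[of f 2 2] by simp
  also have "\<dots> = (f oo fps_X^2) oo fps_X^2" by (subst frob[of "f^2"]) (subst frob[of f], rule refl)
  also have "\<dots> = f oo fps_X^4" by (simp add: compose_Xpow_Xpow)
  finally show ?thesis .
qed

definition eqm :: "nat \<Rightarrow> 'a fps \<Rightarrow> 'a fps \<Rightarrow> bool" where
  "eqm m f g \<longleftrightarrow> (\<forall>i<m. f $ i = g $ i)"

lemma eqm_refl[simp]: "eqm m f f" by (simp add: eqm_def)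
lemma eqm_sym: "eqm m f g \<Longrightarrow> eqm m g f" by (simp add: eqm_def)
lemma eqm_trans: "eqm m f g \<Longrightarrow> eqm m g h \<Longrightarrow> eqm m f h" by (simp add: eqm_def)
lemma eqm_mono: "eqm m f g \<Longrightarrow> m' \<le> m \<Longrightarrow> eqm m' f g" by (simp add: eqm_def)

lemma eqm_mult:
  fixes f :: "'a::comm_ring_1 fps"
  assumes "eqm m f f'" "eqm m g g'"
  shows "eqm m (f*g) (f'*g')"
  unfolding eqm_def
proof (intro allI impI)
  fix i assume i: "i < m"
  show "(f*g) $ i = (f'*g') $ i"
    unfolding fps_mult_nth using assms i by (intro sum.cong refl) (auto simp: eqm_def)
qed

lemma eqm_add:
  assumes "eqm m f f'" "eqm m g g'"
  shows "eqm m (f+g) (f'+g')"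
  using assms by (simp add: eqm_def)

lemma eqm_diff:
  fixes f :: "'a::ab_group_add fps"
  assumes "eqm m f f'" "eqm m g g'"
  shows "eqm m (f-g) (f'-g')"
  using assms by (simp add: eqm_def)

lemma eqm_power:
  fixes f :: "'a::comm_ring_1 fps"
  assumes "eqm m f f'"
  shows "eqm m (f^k) (f'^k)"
  by (induction k) (use assms in \<open>auto intro: eqm_mult\<close>)

lemma eqm_prod:
  fixes f :: "'b \<Rightarrow> 'a::comm_ring_1 fps"
  assumes "\<And>j. j \<in> A \<Longrightarrow> eqm m (f j) (g j)"
  shows "eqm m (\<Prod>j\<in>A. f j) (\<Prod>j\<in>A. g j)"
  using assms
proof (induction A rule: infinite_finite_induct)
  case (insert x F)
  then show ?case by (simp add: eqm_mult)
qed auto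

lemma eqm_sum:
  fixes f :: "'b \<Rightarrow> 'a::comm_ring_1 fps"
  assumes "\<And>j. j \<in> A \<Longrightarrow> eqm m (f j) (g j)"
  shows "eqm m (\<Sum>j\<in>A. f j) (\<Sum>j\<in>A. g j)"
  using assms unfolding eqm_def by (simp add: fps_sum_nth)

lemma eqm_Xpow_one:
  assumes "m \<le> e" "0 < e"
  shows "eqm m (1 - fps_X^e) (1::'a::comm_ring_1 fps)"
  using assms unfolding eqm_def by (auto simp: fps_X_power_nth)

lemma eqm_Xpow_one':
  assumes "m \<le> e" "0 < e"
  shows "eqm m (1 + fps_X^e) (1::'a::comm_ring_1 fps)"
  using assms unfolding eqm_def by (auto simp: fps_X_power_nth)

lemma eqm_shift:
  fixes f :: "'a::comm_ring_1 fps"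
  assumes "eqm m f g"
  shows "eqm (m + e) (fps_X^e * f) (fps_X^e * g)"
  using assms unfolding eqm_def by (auto simp: fps_X_power_mult_nth)

lemma eqm_compose:
  fixes f :: "'a::comm_ring_1 fps"
  assumes "eqm m f g" "k > 0" "n div k < m"
  shows "(f oo fps_X^k) $ n = (g oo fps_X^k) $ n"
  using assms by (auto simp: compose_Xpow_nth eqm_def)

lemma eqm_nth: "eqm m f g \<Longrightarrow> i < m \<Longrightarrow> f $ i = g $ i" by (simp add: eqm_def)

definition fp :: "nat \<Rightarrow> nat \<Rightarrow> 'a::comm_ring_1 fps" where
  "fp k N = (\<Prod>j\<in>{1..N}. (1 - fps_X^(k*j)))"

lemma fp_stab:
  assumes "k > 0" "M \<le> N"
  shows "eqm (M+1) (fp k N) (fp k M :: 'a::comm_ring_1 fps)"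
proof -
  have "{1..N} = {1..M} \<union> {M+1..N}" using assms by auto
  then have "fp k N = fp k M * (\<Prod>j\<in>{M+1..N}. (1 - fps_X^(k*j)) :: 'a fps)"
    unfolding fp_def by (subst prod.union_disjoint[symmetric]) auto
  moreover have "eqm (M+1) (\<Prod>j\<in>{M+1..N}. (1 - fps_X^(k*j)) :: 'a fps) (\<Prod>j\<in>{M+1..N}. 1)"
  proof (rule eqm_prod)
    fix j assume j: "j \<in> {M+1..N}"
    have kj: "j \<le> k * j" using assms(1) by simp
    have "M + 1 \<le> k * j" using j kj by (simp only: atLeastAtMost_iff) linarith
    moreover have "0 < k*j" using j assms(1) by simp
    ultimately show "eqm (M+1) (1 - fps_X^(k*j)) (1 :: 'a fps)" by (rule eqm_Xpow_one)
  qed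
  ultimately show ?thesis using eqm_mult[of "M+1" "fp k M" "fp k M"] by fastforce
qed

lemma qpoch_eqm:
  assumes "k > 0"
  shows "eqm (N+1) (qpoch k) (fp k N)"
  unfolding eqm_def
proof (intro allI impI)
  fix i assume i: "i < N+1"
  have "qpoch k $ i = fp k i $ i" by (simp add: qpoch_def fp_def)
  also have "\<dots> = fp k N $ i"
    using eqm_nth[OF fp_stab[OF assms, of i N, where 'a=rat], of i] i by simp
  finally show "qpoch k $ i = fp k N $ i" .
qed

lemma fp_compose:
  assumes "k > 0"
  shows "fp 1 N oo fps_X^k = (fp k N :: rat fps)"
  unfolding fp_def using assms
  by (simp add: fps_compose_prod_distrib fps_compose_sub_distrib fps_X_power_compose power_mult[symmetric] mult.commute)

lemma qpoch_compose:
  assumes "k > 0"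
  shows "qpoch k = qpoch 1 oo fps_X^k"
proof (rule fps_ext)
  fix n
  have "(qpoch 1 oo fps_X^k) $ n = (fp 1 n oo fps_X^k) $ n"
    by (rule eqm_compose[OF qpoch_eqm assms]) (use assms in \<open>auto simp: div_le_dividend le_imp_less_Suc\<close>)
  also have "\<dots> = fp k n $ n" using fp_compose[OF assms] by simp
  also have "\<dots> = qpoch k $ n" using qpoch_eqm[OF assms, of n] by (simp add: eqm_def)
  finally show "qpoch k $ n = (qpoch 1 oo fps_X^k) $ n" by simp
qed


definition isint :: "rat fps \<Rightarrow> bool" where "isint f \<longleftrightarrow> (\<forall>n. f $ n \<in> \<int>)"
definition red :: "rat fps \<Rightarrow> bit fps" where "red f = Abs_fps (\<lambda>n. of_int \<lfloor>f $ n\<rfloor>)"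

lemma Ints_floor_rat: "(x::rat) \<in> \<int> \<Longrightarrow> of_int \<lfloor>x\<rfloor> = x"
  by (elim Ints_cases) simp

lemma isint_nth: "isint f \<Longrightarrow> f $ n = of_int \<lfloor>f $ n\<rfloor>"
  by (simp add: isint_def Ints_floor_rat)

lemma red_nth: "red f $ n = of_int \<lfloor>f $ n\<rfloor>" by (simp add: red_def)

lemma isint_mult[intro]: "isint f \<Longrightarrow> isint g \<Longrightarrow> isint (f*g)"
  unfolding isint_def fps_mult_nth by (intro allI Ints_sum Ints_mult) auto
lemma isint_add[intro]: "isint f \<Longrightarrow> isint g \<Longrightarrow> isint (f+g)"
  unfolding isint_def by auto
lemma isint_diff[intro]: "isint f \<Longrightarrow> isint g \<Longrightarrow> isint (f-g)"
  unfolding isint_def by auto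
lemma isint_uminus[intro]: "isint f \<Longrightarrow> isint (-f)"
  unfolding isint_def by auto
lemma isint_1[intro]: "isint 1" unfolding isint_def by (auto simp: fps_one_nth)
lemma isint_0[intro]: "isint 0" unfolding isint_def by auto
lemma isint_numeral[intro]: "isint (numeral k)" unfolding isint_def by (auto simp: numeral_fps_const)
lemma isint_X[intro]: "isint fps_X" unfolding isint_def by (auto simp: fps_X_nth)
lemma isint_power[intro]: "isint f \<Longrightarrow> isint (f^k)"
  by (induction k) auto
lemma isint_Xpow[intro]: "isint (fps_X^k)" unfolding isint_def by (auto simp: fps_X_power_nth)
lemma isint_prod[intro]: "(\<And>j. j \<in> A \<Longrightarrow> isint (f j)) \<Longrightarrow> isint (\<Prod>j\<in>A. f j)"
  by (induction A rule: infinite_finite_induct) auto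
lemma isint_sum[intro]: "(\<And>j. j \<in> A \<Longrightarrow> isint (f j)) \<Longrightarrow> isint (\<Sum>j\<in>A. f j)"
  by (induction A rule: infinite_finite_induct) auto
lemma isint_compose[intro]: "isint f \<Longrightarrow> k > 0 \<Longrightarrow> isint (f oo fps_X^k)"
  unfolding isint_def by (auto simp: compose_Xpow_nth)

lemma red_mult:
  assumes "isint f" "isint g"
  shows "red (f*g) = red f * red g"
proof (rule fps_ext)
  fix n
  have "(f*g) $ n = (\<Sum>i=0..n. of_int \<lfloor>f$i\<rfloor> * of_int \<lfloor>g$(n-i)\<rfloor>)"
    unfolding fps_mult_nth using isint_nth[OF assms(1)] isint_nth[OF assms(2)]
    by (intro sum.cong refl) metis
  also have "\<dots> = of_int (\<Sum>i=0..n. \<lfloor>f$i\<rfloor> * \<lfloor>g$(n-i)\<rfloor>)" by simp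
  finally have h: "(f*g) $ n = of_int (\<Sum>i=0..n. \<lfloor>f$i\<rfloor> * \<lfloor>g$(n-i)\<rfloor>)" .
  show "red (f*g) $ n = (red f * red g) $ n"
    by (simp only: red_nth h floor_of_int) (simp add: fps_mult_nth red_nth)
qed

lemma red_add:
  assumes "isint f" "isint g" shows "red (f+g) = red f + red g"
proof (rule fps_ext)
  fix n
  have "(f+g) $ n = of_int (\<lfloor>f$n\<rfloor> + \<lfloor>g$n\<rfloor>)"
    using isint_nth[OF assms(1), of n] isint_nth[OF assms(2), of n] by simp
  then show "red (f+g) $ n = (red f + red g) $ n" by (simp only: red_nth floor_of_int) (simp add: red_nth)
qed

lemma red_diff:
  assumes "isint f" "isint g" shows "red (f-g) = red f - red g"
proof (rule fps_ext)
  fix n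
  have "(f-g) $ n = of_int (\<lfloor>f$n\<rfloor> - \<lfloor>g$n\<rfloor>)"
    using isint_nth[OF assms(1), of n] isint_nth[OF assms(2), of n] by simp
  then show "red (f-g) $ n = (red f - red g) $ n" by (simp only: red_nth floor_of_int) (simp add: red_nth)
qed

lemma red_1[simp]: "red 1 = 1"
  by (rule fps_ext) (simp add: red_nth fps_one_nth)
lemma red_0[simp]: "red 0 = 0"
  by (rule fps_ext) (simp add: red_nth)
lemma red_Xpow[simp]: "red (fps_X^k) = fps_X^k"
  by (rule fps_ext) (simp add: red_nth fps_X_power_nth)
lemma red_X[simp]: "red fps_X = fps_X"
  using red_Xpow[of 1] by simp

lemma red_power: "isint f \<Longrightarrow> red (f^k) = red f ^ k"
proof (induction k)
  case (Suc k)
  then show ?case using red_mult[OF Suc.prems isint_power[OF Suc.prems, of k]] by simp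
qed simp

lemma red_prod: "(\<And>j. j \<in> A \<Longrightarrow> isint (f j)) \<Longrightarrow> red (\<Prod>j\<in>A. f j) = (\<Prod>j\<in>A. red (f j))"
proof (induction A rule: infinite_finite_induct)
  case (insert x F)
  then show ?case by (simp add: red_mult isint_prod)
qed auto

lemma red_compose: "k > 0 \<Longrightarrow> red (f oo fps_X^k) = red f oo fps_X^k"
  by (rule fps_ext) (simp add: red_nth compose_Xpow_nth)

lemma red_eqm: "eqm m f g \<Longrightarrow> eqm m (red f) (red g)"
  by (simp add: eqm_def red_nth)

lemma isint_inverse:
  assumes f: "isint f" and f0: "f $ 0 = 1"
  shows "isint (inverse f)"
  unfolding isint_def
proof
  fix n
  let ?g = "inverse f"
  have gf: "?g * f = 1" using f0 by (intro inverse_mult_eq_1) simp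
  show "?g $ n \<in> \<int>"
  proof (induction n rule: less_induct)
    case (less n)
    show ?case
    proof (cases n)
      case 0
      then show ?thesis using f0 by simp
    next
      case (Suc m)
      have "(?g * f) $ n = 0" using gf Suc by (simp add: fps_one_nth)
      moreover have "(?g * f) $ n = (\<Sum>i=0..m. ?g$i * f$(n-i)) + ?g$n"
        unfolding fps_mult_nth Suc using f0 by (simp add: sum.atLeast0_atMost_Suc)
      ultimately have "?g$n = - (\<Sum>i=0..m. ?g$i * f$(n-i))" by (simp add: eq_neg_iff_add_eq_0 add.commute)
      moreover have "(\<Sum>i=0..m. ?g$i * f$(n-i)) \<in> \<int>"
        using less Suc f unfolding isint_def by (intro Ints_sum Ints_mult) auto
      ultimately show ?thesis by simp
    qed
  qed
qed

lemma red_inverse: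
  assumes f: "isint f" and f0: "f $ 0 = 1"
  shows "red (inverse f) = inverse (red f)"
proof -
  have "red (inverse f) * red f = red (inverse f * f)"
    using red_mult[OF isint_inverse[OF f f0] f] by simp
  also have "inverse f * f = 1" using f0 by (intro inverse_mult_eq_1) simp
  finally have "red f * red (inverse f) = 1" by (simp add: mult.commute)
  then show ?thesis by (rule fps_inverse_unique[symmetric])
qed

lemma isint_qpoch: "isint (qpoch k)"
  unfolding isint_def qpoch_def by (auto intro!: isint_prod[unfolded isint_def, rule_format])

lemma qpoch0: "qpoch k $ 0 = 1"
  by (simp add: qpoch_def)


definition istri :: "nat \<Rightarrow> bool" where "istri n \<longleftrightarrow> (\<exists>x::nat. x^2 = 8*n+1)"
definition psi :: "bit fps" where "psi = Abs_fps (\<lambda>n. if istri n then 1 else 0)"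

lemma psi0: "psi $ 0 = 1"
  by (auto simp: psi_def istri_def intro: exI[of _ 1])

lemma inv_comp:
  fixes f :: "bit fps"
  assumes "f $ 0 \<noteq> 0" "k > 0"
  shows "inverse (f oo fps_X^k) = inverse f oo fps_X^k"
  using assms by (simp add: fps_inverse_compose)

lemma comp_mult:
  fixes f :: "bit fps"
  assumes "k > 0"
  shows "(f * g) oo fps_X^k = (f oo fps_X^k) * (g oo fps_X^k)"
  using assms by (simp add: fps_compose_mult_distrib)

lemma comp_add:
  fixes f :: "bit fps"
  shows "(f + g) oo fps_X^k = (f oo fps_X^k) + (g oo fps_X^k)"
  by (simp add: fps_compose_add_distrib)

lemma comp_pow:
  fixes f :: "bit fps"
  assumes "k > 0"
  shows "(f ^ n) oo fps_X^k = (f oo fps_X^k) ^ n"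
  using assms by (simp add: fps_compose_power)

lemma comp0: "k > 0 \<Longrightarrow> (f oo fps_X^k) $ 0 = f $ 0"
  by simp

lemma inv_cancel:
  fixes f :: "bit fps"
  assumes "f $ 0 \<noteq> 0"
  shows "inverse f * f = 1" "f * inverse f = 1"
  using assms by (auto intro: inverse_mult_eq_1 inverse_mult_eq_1')

lemma psi_pow0: "(psi ^ n) $ 0 = 1"
  by (simp add: fps_power_zeroth psi0)

lemma main_alg:
  assumes I1: "red (qpoch 1) ^ 3 = psi"
  assumes I2: "psi * (psi oo fps_X^3) = (psi oo fps_X^4) + fps_X * (psi oo fps_X^12)"
  assumes dis: "psi = (Abs_fps (\<lambda>n. psi $ (3*n)) oo fps_X^3) + fps_X * ((psi oo fps_X^3) oo fps_X^3)"
  shows "red j6_series $ (3*(8*n+1)+1) = psi $ n"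
proof -
  define E where "E = red (qpoch 1)"
  have E0: "E $ 0 = 1" by (simp add: E_def red_nth qpoch0)
  have rq: "red (qpoch k) = E oo fps_X^k" if "k > 0" for k
    using that by (simp add: E_def qpoch_compose[OF that] red_compose)
  define E3 where "E3 = E oo fps_X^3"
  have E30: "E3 $ 0 = 1" by (simp add: E3_def E0)
  have E2: "red (qpoch 2) = E^2" by (simp add: rq frob[of E])
  have E6: "red (qpoch 6) = E3^2"
  proof -
    have "red (qpoch 6) = E oo fps_X^(3*2)" by (simp add: rq)
    also have "\<dots> = E3 oo fps_X^2" by (simp add: E3_def compose_Xpow_Xpow)
    also have "\<dots> = E3^2" by (rule frob[of E3, symmetric])
    finally show ?thesis .
  qed
  have isB: "isint (qpoch 1 * qpoch 6 ^ 3)" by (intro isint_mult isint_power isint_qpoch)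
  have B0: "(qpoch 1 * qpoch 6 ^ 3) $ 0 = 1" by (simp add: qpoch0 fps_power_zeroth)
  have rj: "red j6_series = (E^2 * E3^3 * inverse (E * (E3^2)^3))^3"
    unfolding j6_series_def
    apply (subst red_power)
     apply (intro isint_mult isint_power isint_qpoch isint_inverse isB B0)
    apply (subst red_mult)
      apply (intro isint_mult isint_power isint_qpoch)
     apply (intro isint_inverse isB B0)
    apply (subst red_inverse[OF isB B0])
    apply (simp add: red_mult red_power isint_power isint_qpoch E2 E6 flip: E_def)
    apply (simp add: rq E3_def)
    done
  define W where "W = E^2 * E3^3 * inverse (E * (E3^2)^3)"
  have W3: "W * E3^3 = E"
  proof -
    have nz: "(E * (E3^2)^3) $ 0 \<noteq> 0" by (simp add: E0 E30 fps_power_zeroth)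
    have "W * E3^3 = E * ((E * (E3^2)^3) * inverse (E * (E3^2)^3))"
      unfolding W_def by (simp add: algebra_simps power_mult[symmetric] power_add[symmetric] power2_eq_square)
    also have "\<dots> = E" using inv_cancel(2)[OF nz] by simp
    finally show ?thesis .
  qed
  have J1: "red j6_series * E3^9 = psi"
  proof -
    have "red j6_series * E3^9 = (W * E3^3)^3" by (simp add: rj W_def power_mult_distrib power_mult[symmetric])
    also have "\<dots> = psi" using W3 I1 E_def by simp
    finally show ?thesis .
  qed
  define Q where "Q = psi^3 oo fps_X^3"
  have Q: "E3^9 = Q"
  proof -
    have "E3^9 = (E^9) oo fps_X^3" by (simp add: E3_def comp_pow)
    moreover have "E^9 = psi^3" using I1 power_mult[of E 3 3] unfolding E_def by simp
    ultimately show ?thesis by (simp add: Q_def)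
  qed
  have Q0: "Q $ 0 \<noteq> 0" by (simp add: Q_def psi_pow0)
  define D where "D = inverse (psi^3)"
  have J2: "red j6_series = psi * (D oo fps_X^3)"
  proof -
    have "red j6_series = red j6_series * (Q * inverse Q)" using inv_cancel(2)[OF Q0] by simp
    also have "\<dots> = psi * inverse Q" using J1 Q by (simp add: mult.assoc[symmetric])
    also have "inverse Q = D oo fps_X^3" unfolding Q_def D_def
      by (rule inv_comp) (simp_all add: psi_pow0)
    finally show ?thesis .
  qed
  define A where "A = Abs_fps (\<lambda>n. psi $ (3*n))"
  define K where "K = (psi oo fps_X^3) * D"
  have J3: "red j6_series = ((A * D) oo fps_X^3) + fps_X * (K oo fps_X^3)"
    unfolding J2 K_def A_def by (subst dis) (simp add: comp_mult algebra_simps)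
  have JK: "red j6_series $ (3*M+1) = K $ M" for M
  proof -
    have "\<not> (3::nat) dvd 3*M+1" by presburger
    then show ?thesis unfolding J3 by (simp add: compose_Xpow_nth)
  qed
  define P4 where "P4 = psi oo fps_X^4"
  have P4: "psi^4 = P4" unfolding P4_def by (rule frob4)
  have P40: "P4 $ 0 \<noteq> 0" by (simp add: P4_def psi0)
  define H where "H = (psi oo fps_X^3) * inverse psi"
  have K1: "K * P4 = (psi oo fps_X^3) * psi"
  proof -
    have "K * P4 = (psi oo fps_X^3) * psi * (D * psi^3)"
      by (simp add: K_def P4[symmetric] algebra_simps power_Suc[symmetric] del: power_Suc)
    also have "D * psi^3 = 1" unfolding D_def by (rule inv_cancel(1)) (simp add: psi_pow0)
    finally show ?thesis by simp
  qed
  have K2: "K = 1 + fps_X * (H oo fps_X^4)"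
  proof -
    have "K = K * (P4 * inverse P4)" using inv_cancel(2)[OF P40] by simp
    also have "\<dots> = (P4 + fps_X * (psi oo fps_X^12)) * inverse P4"
      using K1 I2 by (simp add: mult.assoc[symmetric] mult.commute[of psi] P4_def)
    also have "\<dots> = 1 + fps_X * ((psi oo fps_X^12) * inverse P4)"
      using inv_cancel(2)[OF P40] by (simp add: algebra_simps)
    also have "(psi oo fps_X^12) * inverse P4 = H oo fps_X^4"
    proof -
      have "psi oo fps_X^12 = (psi oo fps_X^3) oo fps_X^4" by (simp add: compose_Xpow_Xpow)
      moreover have "inverse P4 = inverse psi oo fps_X^4" unfolding P4_def
        by (rule inv_comp) (simp_all add: psi0)
      ultimately show ?thesis by (simp add: H_def comp_mult)
    qed
    finally show ?thesis .
  qed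
  have KH: "K $ (8*n+1) = H $ (2*n)"
  proof -
    have "K $ (8*n+1) = (H oo fps_X^4) $ (8*n)" by (simp add: K2)
    also have "\<dots> = H $ (2*n)" by (simp add: compose_Xpow_nth)
    finally show ?thesis .
  qed
  define P2 where "P2 = psi oo fps_X^2"
  have P2: "psi^2 = P2" unfolding P2_def by (rule frob)
  have P20: "P2 $ 0 \<noteq> 0" by (simp add: P2_def psi0)
  have H1: "H * P2 = (psi oo fps_X^3) * psi"
  proof -
    have "H * P2 = (psi oo fps_X^3) * psi * (inverse psi * psi)"
      by (simp add: H_def P2[symmetric] algebra_simps power2_eq_square)
    also have "inverse psi * psi = 1" by (rule inv_cancel(1)) (simp add: psi0)
    finally show ?thesis by simp
  qed
  define G where "G = (psi oo fps_X^6) * inverse psi"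
  have H2: "H = (psi oo fps_X^2) + fps_X * (G oo fps_X^2)"
  proof -
    have "H = H * (P2 * inverse P2)" using inv_cancel(2)[OF P20] by simp
    also have "\<dots> = (P4 + fps_X * (psi oo fps_X^12)) * inverse P2"
      using H1 I2 by (simp add: mult.assoc[symmetric] mult.commute[of psi] P4_def)
    also have "\<dots> = P4 * inverse P2 + fps_X * ((psi oo fps_X^12) * inverse P2)"
      by (simp add: algebra_simps)
    also have "inverse P2 = inverse psi oo fps_X^2" unfolding P2_def
      by (rule inv_comp) (simp_all add: psi0)
    also have "P4 * (inverse psi oo fps_X^2) = (P2 * inverse psi) oo fps_X^2"
      by (simp add: P4_def P2_def comp_mult compose_Xpow_Xpow)
    also have "P2 * inverse psi = psi"
    proof -
      have "P2 * inverse psi = psi * (psi * inverse psi)" by (simp add: P2[symmetric] power2_eq_square mult.assoc)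
      also have "psi * inverse psi = 1" by (rule inv_cancel(2)) (simp add: psi0)
      finally show ?thesis by simp
    qed
    also have "(psi oo fps_X^12) * (inverse psi oo fps_X^2) = G oo fps_X^2"
      by (simp add: G_def comp_mult compose_Xpow_Xpow)
    finally show ?thesis .
  qed
  have "H $ (2*n) = psi $ n"
    unfolding H2 by (cases n) (simp_all add: compose_Xpow_nth)
  then show ?thesis using JK[of "8*n+1"] KH by simp
qed


definition sig :: "int \<times> int \<Rightarrow> int \<times> int" where
  "sig = (\<lambda>(x,y). if (x - y) mod 4 = 0 then (\<bar>x - 3*y\<bar> div 2, (x+y) div 2)
                   else ((x + 3*y) div 2, \<bar>x - y\<bar> div 2))"

definition SS :: "nat \<Rightarrow> (int \<times> int) set" where
  "SS N = {(x,y). 0 < x \<and> 0 < y \<and> odd x \<and> odd y \<and> x^2 + 3*y^2 = 8*int N + 4}"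

lemma odd_abs: "odd (a::int) \<Longrightarrow> odd \<bar>a\<bar>"
  by (cases "a \<ge> 0") simp_all

lemma sigA:
  assumes "x = y + 4*t"
  shows "sig (x,y) = (\<bar>2*t - y\<bar>, y + 2*t)"
proof -
  have "(x - y) mod 4 = 0" using assms by simp
  moreover have "x - 3*y = 2*(2*t - y)" using assms by simp
  moreover have "x + y = 2*(y + 2*t)" using assms by simp
  ultimately show ?thesis unfolding sig_def by (simp add: abs_mult)
qed

lemma sigB:
  assumes "x = y + 4*t + 2"
  shows "sig (x,y) = (2*y + 2*t + 1, \<bar>2*t + 1\<bar>)"
proof -
  have "(x - y) mod 4 = 2" using assms by simp
  moreover have "x + 3*y = 2*(2*y + 2*t + 1)" using assms by simp
  moreover have "x - y = 2*(2*t + 1)" using assms by simp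
  ultimately show ?thesis unfolding sig_def by (simp add: abs_mult)
qed

lemma odd_diff_cases:
  assumes "odd (x::int)" "odd y"
  obtains t where "x = y + 4*t" | t where "x = y + 4*t + 2"
proof -
  have "even (x - y)" using assms by simp
  then obtain u where u: "x - y = 2*u" by (elim evenE)
  show ?thesis
  proof (cases "even u")
    case True
    then obtain t where "u = 2*t" by (elim evenE)
    then show ?thesis using u that(1)[of t] by simp
  next
    case False
    then obtain t where "u = 2*t+1" by (elim oddE)
    then show ?thesis using u that(2)[of t] by simp
  qed
qed

lemma sig_props:
  assumes "(x,y) \<in> SS N"
  shows "sig (x,y) \<in> SS N" "sig (sig (x,y)) = (x,y)" "sig (x,y) = (x,y) \<longleftrightarrow> x = y \<or> x = 3*y"
proof -
  have xy: "0 < x" "0 < y" "odd x" "odd y" "x^2 + 3*y^2 = 8*int N + 4"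
    using assms by (auto simp: SS_def)
  from odd_diff_cases[OF xy(3,4)]
  have "sig (x,y) \<in> SS N \<and> sig (sig (x,y)) = (x,y) \<and> (sig (x,y) = (x,y) \<longleftrightarrow> x = y \<or> x = 3*y)"
  proof cases
    case (1 t)
    have s1: "sig (x,y) = (\<bar>2*t - y\<bar>, y + 2*t)" by (rule sigA[OF 1])
    have pos: "0 < y + 2*t" using xy(1,2) 1 by simp
    have nz: "2*t - y \<noteq> 0" using xy(4) by (metis add_diff_cancel_left' dvd_triv_left even_diff eq_iff_diff_eq_0)
    have o1: "odd \<bar>2*t - y\<bar>" using xy(4) by (intro odd_abs) simp
    have o2: "odd (y + 2*t)" using xy(4) by simp
    have eq: "\<bar>2*t - y\<bar>^2 + 3*(y+2*t)^2 = 8*int N + 4"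
      using xy(5) 1 by (simp add: power2_eq_square algebra_simps)
    have inS: "sig (x,y) \<in> SS N" unfolding s1 SS_def using pos nz o1 o2 eq by auto
    have bk: "sig (sig (x,y)) = (x,y)"
    proof (cases "2*t \<ge> y")
      case True
      have yy: "2*((y + 1) div 2) = y + 1" using xy(4) by (auto elim!: oddE)
      then have "\<bar>2*t - y\<bar> = (y + 2*t) + 4*(-((y+1) div 2)) + 2" using True by simp
      then have "sig (\<bar>2*t - y\<bar>, y + 2*t) = (2*(y+2*t) + 2*(-((y+1) div 2)) + 1, \<bar>2*(-((y+1) div 2)) + 1\<bar>)" by (rule sigB)
      then show ?thesis using s1 1 xy(2) yy by simp
    next
      case False
      then have "\<bar>2*t - y\<bar> = (y + 2*t) + 4*(-t)" by simp
      then have "sig (\<bar>2*t - y\<bar>, y + 2*t) = (\<bar>2*(-t) - (y+2*t)\<bar>, (y+2*t) + 2*(-t))" by (rule sigA)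
      moreover have "\<bar>2*(-t) - (y+2*t)\<bar> = x" using 1 xy(1) by simp
      ultimately show ?thesis using s1 by simp
    qed
    have fx: "sig (x,y) = (x,y) \<longleftrightarrow> x = y \<or> x = 3*y"
    proof
      assume "sig (x,y) = (x,y)"
      then have "y + 2*t = y" using s1 by simp
      then show "x = y \<or> x = 3*y" using 1 by simp
    next
      assume "x = y \<or> x = 3*y"
      moreover have "x \<noteq> 3*y"
      proof
        assume "x = 3*y" then have "2*y = 4*t" using 1 by simp
        then have "y = 2*t" by simp
        then show False using xy(4) by simp
      qed
      ultimately have "x = y" by simp
      then have "t = 0" using 1 by simp
      then show "sig (x,y) = (x,y)" using s1 xy(2) \<open>x = y\<close> by simp
    qed
    show ?thesis using inS bk fx by simp
  next
    case (2 t)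
    have s1: "sig (x,y) = (2*y + 2*t + 1, \<bar>2*t + 1\<bar>)" by (rule sigB[OF 2])
    have pos: "0 < 2*y + 2*t + 1" using xy(1,2) 2 by simp
    have nz: "2*t + 1 \<noteq> 0" by presburger
    have o1: "odd \<bar>2*t + 1\<bar>" by (intro odd_abs) simp
    have o2: "odd (2*y + 2*t + 1)" by simp
    have eq: "(2*y + 2*t + 1)^2 + 3*\<bar>2*t + 1\<bar>^2 = 8*int N + 4"
      using xy(5) 2 by (simp add: power2_eq_square algebra_simps)
    have inS: "sig (x,y) \<in> SS N" unfolding s1 SS_def using pos nz o1 o2 eq by auto
    have bk: "sig (sig (x,y)) = (x,y)"
    proof (cases "2*t + 1 > 0")
      case True
      then have "2*y + 2*t + 1 = \<bar>2*t + 1\<bar> + 4*((y - 1) div 2) + 2"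
        using xy(4) by (auto elim!: oddE)
      then have "sig (2*y + 2*t + 1, \<bar>2*t + 1\<bar>) = (2*\<bar>2*t + 1\<bar> + 2*((y - 1) div 2) + 1, \<bar>2*((y - 1) div 2) + 1\<bar>)"
        by (rule sigB)
      moreover have "2*((y - 1) div 2) + 1 = y" using xy(4) by (auto elim!: oddE)
      ultimately show ?thesis using s1 2 True xy(2) by simp
    next
      case False
      then have "2*y + 2*t + 1 = \<bar>2*t + 1\<bar> + 4*((y + 1) div 2 + t)"
        using xy(4) by (auto elim!: oddE)
      then have "sig (2*y + 2*t + 1, \<bar>2*t + 1\<bar>) = (\<bar>2*((y + 1) div 2 + t) - \<bar>2*t + 1\<bar>\<bar>, \<bar>2*t + 1\<bar> + 2*((y + 1) div 2 + t))"
        by (rule sigA)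
      moreover have "2*((y + 1) div 2) = y + 1" using xy(4) by (auto elim!: oddE)
      ultimately show ?thesis using s1 2 False xy(1) by simp
    qed
    have fx: "sig (x,y) = (x,y) \<longleftrightarrow> x = y \<or> x = 3*y"
    proof
      assume "sig (x,y) = (x,y)"
      then have "2*y + 2*t + 1 = x" "\<bar>2*t + 1\<bar> = y" using s1 by simp_all
      then show "x = y \<or> x = 3*y" using 2 by simp
    next
      assume "x = y \<or> x = 3*y"
      moreover have "x \<noteq> y" using 2 by presburger
      ultimately have "x = 3*y" by simp
      then have "y = 2*t + 1" using 2 by simp
      then show "sig (x,y) = (x,y)" using s1 2 xy(2) by simp
    qed
    show ?thesis using inS bk fx by simp
  qed
  then show "sig (x,y) \<in> SS N" "sig (sig (x,y)) = (x,y)" "sig (x,y) = (x,y) \<longleftrightarrow> x = y \<or> x = 3*y"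
    by simp_all
qed


lemma istri_int: "istri n \<longleftrightarrow> (\<exists>x::int. 0 < x \<and> x^2 = 8*int n + 1)"
proof
  assume "istri n"
  then obtain z :: nat where z: "z^2 = 8*n+1" by (auto simp: istri_def)
  then have "int z ^ 2 = 8 * int n + 1" by (metis of_nat_add of_nat_mult of_nat_numeral of_nat_1 of_nat_power)
  moreover have "z > 0" using z by (cases z) auto
  ultimately show "\<exists>x::int. 0 < x \<and> x^2 = 8*int n + 1" by (intro exI[of _ "int z"]) simp
next
  assume "\<exists>x::int. 0 < x \<and> x^2 = 8*int n + 1"
  then obtain x :: int where x: "0 < x" "x^2 = 8*int n + 1" by blast
  have "int (nat x ^ 2) = int (8*n+1)" using x by simp
  then have "nat x ^ 2 = 8*n+1" by (simp only: of_nat_eq_iff)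
  then show "istri n" unfolding istri_def by (rule exI)
qed

lemma odd_sq_int:
  assumes "odd (y::int)"
  obtains b where "y^2 = 8*b+1" "0 \<le> b"
proof -
  obtain r where r: "y = 2*r+1" using assms by (elim oddE)
  have "even (r*(r+1))" by simp
  then obtain s where s: "r*(r+1) = 2*s" by (elim evenE)
  have "y^2 = 8*s+1" using r s by (simp add: power2_eq_square algebra_simps)
  moreover have "0 \<le> r*(r+1)"
    by (cases "r \<ge> 0") (simp_all add: mult_nonpos_nonpos)
  then have "0 \<le> s" using s by simp
  ultimately show ?thesis using that by blast
qed

lemma sq_inj_int: "0 < (x::int) \<Longrightarrow> 0 < x' \<Longrightarrow> x^2 = x'^2 \<Longrightarrow> x = x'"
  by (simp add: power2_eq_iff_nonneg)

lemma finite_SS: "finite (SS N)"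
proof -
  have "SS N \<subseteq> {1..8*int N+4} \<times> {1..8*int N+4}"
  proof
    fix p assume p: "p \<in> SS N"
    obtain x y where xy: "p = (x,y)" by (cases p)
    have h: "0 < x" "0 < y" "x^2 + 3*y^2 = 8*int N + 4" using p xy by (auto simp: SS_def)
    have "x \<le> x^2" "y \<le> y^2" using h by (simp_all add: power2_eq_square)
    moreover have "0 \<le> x^2" "0 \<le> y^2" by simp_all
    ultimately show "p \<in> {1..8*int N+4} \<times> {1..8*int N+4}" using h xy by auto
  qed
  then show ?thesis by (rule finite_subset) simp
qed

definition II :: "nat \<Rightarrow> nat set" where
  "II N = {i\<in>{0..N}. istri i \<and> 3 dvd (N - i) \<and> istri ((N - i) div 3)}"

lemma card_II: "card (II N) = card (SS N)"
proof -
  define g where "g = (\<lambda>(x::int,y::int). nat ((x^2 - 1) div 8))"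
  have key: "\<exists>a b. x^2 = 8*a+1 \<and> y^2 = 8*b+1 \<and> 0 \<le> a \<and> 0 \<le> b \<and> a + 3*b = int N \<and> g (x,y) = nat a"
    if "(x,y) \<in> SS N" for x y
  proof -
    have h: "0 < x" "0 < y" "odd x" "odd y" "x^2 + 3*y^2 = 8*int N + 4" using that by (auto simp: SS_def)
    obtain a where a: "x^2 = 8*a+1" "0 \<le> a" using odd_sq_int[OF h(3)] by blast
    obtain b where b: "y^2 = 8*b+1" "0 \<le> b" using odd_sq_int[OF h(4)] by blast
    have "a + 3*b = int N" using h(5) a b by simp
    moreover have "g (x,y) = nat a" unfolding g_def using a by simp
    ultimately show ?thesis using a b by blast
  qed
  have "bij_betw g (SS N) (II N)"
  proof (rule bij_betw_imageI)
    show "inj_on g (SS N)"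
    proof (rule inj_onI)
      fix p q assume p: "p \<in> SS N" and q: "q \<in> SS N" and e: "g p = g q"
      obtain x y where pxy: "p = (x,y)" by (cases p)
      obtain x' y' where qxy: "q = (x',y')" by (cases q)
      obtain a b where ab: "x^2 = 8*a+1" "y^2 = 8*b+1" "0 \<le> a" "0 \<le> b" "a + 3*b = int N" "g (x,y) = nat a"
        using key p pxy by blast
      obtain a' b' where ab': "x'^2 = 8*a'+1" "y'^2 = 8*b'+1" "0 \<le> a'" "0 \<le> b'" "a' + 3*b' = int N" "g (x',y') = nat a'"
        using key q qxy by blast
      have "a = a'" using e ab ab' pxy qxy by simp
      then have "b = b'" using ab ab' by simp
      have "x = x'" using sq_inj_int[of x x'] p q pxy qxy ab ab' \<open>a = a'\<close> by (simp add: SS_def)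
      moreover have "y = y'" using sq_inj_int[of y y'] p q pxy qxy ab ab' \<open>b = b'\<close> by (simp add: SS_def)
      ultimately show "p = q" using pxy qxy by simp
    qed
    show "g ` SS N = II N"
    proof
      show "g ` SS N \<subseteq> II N"
      proof
        fix i assume "i \<in> g ` SS N"
        then obtain x y where p: "(x,y) \<in> SS N" and i: "i = g (x,y)" by auto
        obtain a b where ab: "x^2 = 8*a+1" "y^2 = 8*b+1" "0 \<le> a" "0 \<le> b" "a + 3*b = int N" "g (x,y) = nat a"
          using key p by blast
        have h: "0 < x" "0 < y" using p by (auto simp: SS_def)
        have i': "int i = a" using i ab by simp
        have "N - i = 3 * nat b" using ab i' by linarith
        moreover have "istri i" unfolding istri_int using h ab i' by auto
        moreover have "istri (nat b)" unfolding istri_int using h ab by auto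
        moreover have "i \<le> N" using ab i' by linarith
        ultimately show "i \<in> II N" by (simp add: II_def)
      qed
    next
      show "II N \<subseteq> g ` SS N"
      proof
        fix i assume i: "i \<in> II N"
        then have iN: "i \<le> N" and ti: "istri i" and d: "3 dvd (N - i)" and tj: "istri ((N - i) div 3)"
          by (auto simp: II_def)
        obtain x where x: "0 < x" "x^2 = 8*int i + 1" using ti istri_int by blast
        obtain y where y: "0 < y" "y^2 = 8*int ((N - i) div 3) + 1" using tj istri_int by blast
        have ox: "odd x"
        proof
          assume "even x" then have "even (x^2)" by simp
          then show False using x(2) by simp
        qed
        have oy: "odd y"
        proof
          assume "even y" then have "even (y^2)" by simp
          then show False using y(2) by simp
        qed
        obtain j where j: "N - i = 3*j" using d by (elim dvdE)
        then have "(N - i) div 3 = j" by simp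
        moreover have "int N - int i = 3 * int j" using j iN by (metis of_nat_diff of_nat_mult of_nat_numeral)
        ultimately have "int ((N - i) div 3) * 3 = int N - int i" by simp
        then have "x^2 + 3*y^2 = 8*int N + 4" using x y by (simp add: algebra_simps)
        then have inS: "(x,y) \<in> SS N" using x y ox oy by (simp add: SS_def)
        have "g (x,y) = i" unfolding g_def using x by simp
        then show "i \<in> g ` SS N" using inS by (metis image_eqI)
      qed
    qed
  qed
  then show ?thesis by (simp add: bij_betw_same_card)
qed


lemma FA_card: "card {p\<in>SS N. fst p = snd p} = (if 4 dvd N \<and> istri (N div 4) then 1 else 0)"
proof (cases "4 dvd N \<and> istri (N div 4)")
  case True
  then obtain m where m: "N = 4*m" and tm: "istri m" by (auto elim!: dvdE)
  obtain w where w: "0 < w" "w^2 = 8*int m + 1" using tm istri_int by blast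
  have ow: "odd w"
  proof
    assume "even w" then have "even (w^2)" by simp
    then show False using w(2) by simp
  qed
  have SE: "{p\<in>SS N. fst p = snd p} = {(w,w)}"
  proof
    show "{p\<in>SS N. fst p = snd p} \<subseteq> {(w,w)}"
    proof
      fix p assume p: "p \<in> {p\<in>SS N. fst p = snd p}"
      obtain x y where xy: "p = (x,y)" by (cases p)
      have h: "x = y" "0 < x" "x^2 + 3*y^2 = 8*int N + 4" using p xy by (auto simp: SS_def)
      then have "x^2 = w^2" using w m by simp
      then have "x = w" using sq_inj_int h w by blast
      then show "p \<in> {(w,w)}" using xy h by simp
    qed
    show "{(w,w)} \<subseteq> {p\<in>SS N. fst p = snd p}"
      using w ow m by (simp add: SS_def)
  qed
  show ?thesis unfolding SE using True by simp
next
  case False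
  have SE: "{p\<in>SS N. fst p = snd p} = {}"
  proof (rule ccontr)
    assume "{p\<in>SS N. fst p = snd p} \<noteq> {}"
    then obtain x y where p: "(x,y) \<in> SS N" "x = y" by auto
    have h: "0 < x" "odd x" "x^2 + 3*y^2 = 8*int N + 4" using p by (auto simp: SS_def)
    obtain b where b: "x^2 = 8*b+1" "0 \<le> b" using odd_sq_int[OF h(2)] by blast
    have "int N = 4*b" using h b p(2) by simp
    then have "N = 4 * nat b" by simp
    moreover have "istri (nat b)" unfolding istri_int using h(1) b by auto
    ultimately show False using False by simp
  qed
  show ?thesis unfolding SE using False by simp
qed

lemma FB_card: "card {p\<in>SS N. fst p = 3 * snd p} = (if N \<noteq> 0 \<and> 12 dvd (N - 1) \<and> istri ((N - 1) div 12) then 1 else 0)"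
proof (cases "N \<noteq> 0 \<and> 12 dvd (N - 1) \<and> istri ((N - 1) div 12)")
  case True
  then obtain m where m0: "N - 1 = 12*m" by (auto elim!: dvdE)
  have "N \<noteq> 0" using True by simp
  then have m: "N = 12*m+1" using m0 by arith
  have tm: "istri m" using True m0 by simp
  obtain w where w: "0 < w" "w^2 = 8*int m + 1" using tm istri_int by blast
  have ow: "odd w"
  proof
    assume "even w" then have "even (w^2)" by simp
    then show False using w(2) by simp
  qed
  have SE: "{p\<in>SS N. fst p = 3 * snd p} = {(3*w,w)}"
  proof
    show "{p\<in>SS N. fst p = 3 * snd p} \<subseteq> {(3*w,w)}"
    proof
      fix p assume p: "p \<in> {p\<in>SS N. fst p = 3 * snd p}"
      obtain x y where xy: "p = (x,y)" by (cases p)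
      have h: "x = 3*y" "0 < y" "x^2 + 3*y^2 = 8*int N + 4" using p xy by (auto simp: SS_def)
      then have "12 * y^2 = 12 * w^2" using w m by (simp add: power_mult_distrib)
      then have "y^2 = w^2" by simp
      then have "y = w" using sq_inj_int h w by blast
      then show "p \<in> {(3*w,w)}" using xy h by simp
    qed
    show "{(3*w,w)} \<subseteq> {p\<in>SS N. fst p = 3 * snd p}"
      using w ow m by (simp add: SS_def power_mult_distrib)
  qed
  show ?thesis unfolding SE using True by simp
next
  case False
  have SE: "{p\<in>SS N. fst p = 3 * snd p} = {}"
  proof (rule ccontr)
    assume "{p\<in>SS N. fst p = 3 * snd p} \<noteq> {}"
    then obtain x y where p: "(x,y) \<in> SS N" "x = 3*y" by auto
    have h: "0 < y" "odd y" "x^2 + 3*y^2 = 8*int N + 4" using p by (auto simp: SS_def)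
    obtain b where b: "y^2 = 8*b+1" "0 \<le> b" using odd_sq_int[OF h(2)] by blast
    have "int N = 12*b + 1" using h b p(2) by (simp add: power_mult_distrib)
    then have N: "N = 12 * nat b + 1" by simp
    moreover have "istri (nat b)" unfolding istri_int using h(1) b by auto
    ultimately show False using False by simp
  qed
  show ?thesis unfolding SE using False by simp
qed

lemma I2: "psi * (psi oo fps_X^3) = (psi oo fps_X^4) + fps_X * (psi oo fps_X^12)"
proof (rule fps_ext)
  fix N :: nat
  have psin: "psi $ i = (if istri i then 1 else 0)" for i by (simp add: psi_def)
  have "(psi * (psi oo fps_X^3)) $ N = (\<Sum>i\<in>{0..N}. if i \<in> II N then 1 else 0)"
    unfolding fps_mult_nth by (intro sum.cong refl) (auto simp: psin compose_Xpow_nth II_def)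
  also have "\<dots> = (\<Sum>i\<in>{0..N} \<inter> II N. 1)" by (rule sum.inter_restrict[symmetric]) simp
  also have "{0..N} \<inter> II N = II N" by (auto simp: II_def)
  also have "(\<Sum>i\<in>II N. (1::bit)) = of_nat (card (SS N))" by (simp add: card_II)
  also have "\<dots> = (\<Sum>p\<in>SS N. (1::bit))" by simp
  also have "\<dots> = (\<Sum>p\<in>{p\<in>SS N. sig p = p}. 1)"
  proof (rule invol_sum_bit[OF finite_SS])
    show "\<forall>p\<in>SS N. sig p \<in> SS N \<and> sig (sig p) = p \<and> (1::bit) = 1"
    proof
      fix p assume p: "p \<in> SS N"
      obtain x y where xy: "p = (x,y)" by (cases p)
      show "sig p \<in> SS N \<and> sig (sig p) = p \<and> (1::bit) = 1"
        using sig_props[of x y N] p xy by simp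
    qed
  qed
  also have "{p\<in>SS N. sig p = p} = {p\<in>SS N. fst p = snd p} \<union> {p\<in>SS N. fst p = 3 * snd p}"
  proof -
    have "sig p = p \<longleftrightarrow> fst p = snd p \<or> fst p = 3 * snd p" if "p \<in> SS N" for p
      using sig_props[of "fst p" "snd p" N] that by simp
    then show ?thesis by blast
  qed
  also have "(\<Sum>p\<in>{p\<in>SS N. fst p = snd p} \<union> {p\<in>SS N. fst p = 3 * snd p}. (1::bit))
      = of_nat (card {p\<in>SS N. fst p = snd p}) + of_nat (card {p\<in>SS N. fst p = 3 * snd p})"
  proof -
    have "{p\<in>SS N. fst p = snd p} \<inter> {p\<in>SS N. fst p = 3 * snd p} = {}"
      by (auto simp: SS_def)
    moreover have "finite {p\<in>SS N. fst p = snd p}" "finite {p\<in>SS N. fst p = 3 * snd p}"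
      using finite_SS by simp_all
    ultimately show ?thesis by (simp add: card_Un_disjoint)
  qed
  also have "\<dots> = ((psi oo fps_X^4) + fps_X * (psi oo fps_X^12)) $ N"
    by (simp add: FA_card FB_card compose_Xpow_nth psin)
  finally show "(psi * (psi oo fps_X^3)) $ N = ((psi oo fps_X^4) + fps_X * (psi oo fps_X^12)) $ N" .
qed


fun qb :: "nat \<Rightarrow> nat \<Rightarrow> rat fps" where
  "qb 0 k = (if k = 0 then 1 else 0)"
| "qb (Suc N) k = (if k = 0 then 1 else qb N (k-1) + fps_X^k * qb N k)"

lemma qb_0[simp]: "qb N 0 = 1"
  by (cases N) simp_all

lemma qb_gt: "N < k \<Longrightarrow> qb N k = 0"
proof (induction N arbitrary: k)
  case (Suc N)
  then show ?case by simp
qed simp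

lemma qb_NN: "qb N N = 1"
proof (induction N)
  case (Suc N)
  then show ?case by (simp add: qb_gt)
qed simp

definition qp :: "nat \<Rightarrow> rat fps" where "qp r = (\<Prod>j\<in>{1..r}. (1 - fps_X^j))"

lemma qp_fp: "fp 1 r = qp r" "fp (Suc 0) r = qp r" by (simp_all add: fp_def qp_def)

lemma qp_Suc: "qp (Suc r) = qp r * (1 - fps_X^(Suc r))"
  by (simp add: qp_def mult.commute)

lemma qp_0[simp]: "qp 0 = 1" by (simp add: qp_def)

lemma qp_nth0: "qp r $ 0 = 1"
  using eqm_nth[OF qpoch_eqm[of 1 r], of 0] by (simp add: qpoch0 qp_fp)

lemma qp_nz: "qp r \<noteq> 0"
  using qp_nth0[of r] by auto

lemma qb_prod: "k \<le> N \<Longrightarrow> qb N k * qp k * qp (N - k) = qp N"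
proof (induction N arbitrary: k)
  case 0
  then show ?case by simp
next
  case (Suc N)
  show ?case
  proof (cases "k = 0")
    case True then show ?thesis by simp
  next
    case k0: False
    show ?thesis
    proof (cases "k = Suc N")
      case True then show ?thesis by (simp add: qb_NN)
    next
      case False
      then have kN: "k \<le> N" using Suc.prems by simp
      obtain k' where k': "k = Suc k'" using k0 by (cases k) auto
      have IH1: "qb N k' * qp k' * qp (N - k') = qp N" using Suc.IH[of k'] kN k' by simp
      have IH2: "qb N k * qp k * qp (N - k) = qp N" using Suc.IH[of k] kN by simp
      have e1: "N - k' = Suc (N - k)" using kN k' by simp
      have e2: "Suc N - k = Suc (N - k)" using kN by simp
      have xx: "fps_X^k * fps_X^(Suc (N-k)) = (fps_X^(Suc N) :: rat fps)"
        using kN by (simp add: power_add[symmetric])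
      have "qb (Suc N) k = qb N k' + fps_X^k * qb N k" using k' by simp
      then have "qb (Suc N) k * qp k * qp (Suc N - k)
          = qb N k' * qp k * qp (Suc (N-k)) + fps_X^k * qb N k * qp k * qp (Suc (N-k))"
        using e2 by (simp add: distrib_right)
      also have "qb N k' * qp k * qp (Suc (N-k)) = (qb N k' * qp k' * qp (N - k')) * (1 - fps_X^k)"
        unfolding e1 k' qp_Suc[of k'] by (simp only: ac_simps)
      also have "fps_X^k * qb N k * qp k * qp (Suc (N-k)) = (qb N k * qp k * qp (N - k)) * (fps_X^k - fps_X^k * fps_X^(Suc (N-k)))"
        unfolding qp_Suc[of "N-k"] by (simp only: ac_simps right_diff_distrib mult_1_right mult_1_left)
      also have "qb N k' * qp k' * qp (N - k') * (1 - fps_X^k) + qb N k * qp k * qp (N - k) * (fps_X^k - fps_X^k * fps_X^(Suc (N-k)))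
          = qp N * (1 - fps_X^(Suc N))"
        using IH1 IH2 xx by (simp add: algebra_simps)
      also have "\<dots> = qp (Suc N)" by (simp add: qp_Suc)
      finally show ?thesis .
    qed
  qed
qed

lemma gen_alg: "(a::rat fps) * (1 - x) + a * (x - y) = a * (1 - y)"
  by (simp add: algebra_simps)

lemma pascal1:
  assumes "1 \<le> k" "k \<le> Suc N"
  shows "qb (Suc N) k = qb N k + fps_X^(Suc N - k) * qb N (k - 1)"
proof (cases "k = Suc N")
  case True
  then show ?thesis by (simp add: qb_gt qb_NN)
next
  case False
  then have kN: "k \<le> N" using assms by simp
  obtain k' where k': "k = Suc k'" using assms by (cases k) auto
  define c where "c = qp k * qp (Suc N - k)"
  have cnz: "c \<noteq> 0" unfolding c_def by (simp add: qp_nz)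
  have e1: "N - k' = Suc N - k" using k' kN by simp
  have e2: "Suc N - k = Suc (N - k)" using kN by simp
  have xx: "fps_X^(Suc N - k) * fps_X^k = (fps_X^(Suc N) :: rat fps)"
    using kN by (simp add: power_add[symmetric])
  have k'N: "k' \<le> N" using kN k' by simp
  have km: "k - 1 = k'" using k' by simp
  have IH1: "qb N k' * qp k' * qp (Suc N - k) = qp N" using qb_prod[OF k'N] unfolding e1 .
  have IH2: "qb N k * qp k * qp (N - k) = qp N" using qb_prod[of k N] kN by simp
  have "(qb N k + fps_X^(Suc N - k) * qb N (k - 1)) * c
      = qb N k * qp k * qp (Suc (N-k)) + fps_X^(Suc N - k) * qb N k' * qp k * qp (Suc N - k)"
    unfolding c_def km e2 by (simp only: distrib_right distrib_left ac_simps)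
  also have "qb N k * qp k * qp (Suc (N-k)) = (qb N k * qp k * qp (N - k)) * (1 - fps_X^(Suc (N-k)))"
    unfolding qp_Suc[of "N-k"] by (simp only: ac_simps)
  also have "fps_X^(Suc N - k) * qb N k' * qp k * qp (Suc N - k)
      = (qb N k' * qp k' * qp (Suc N - k)) * (fps_X^(Suc N - k) - fps_X^(Suc N - k) * fps_X^k)"
    unfolding k' qp_Suc[of k'] by (simp only: ac_simps right_diff_distrib mult_1_right mult_1_left)
  also have "(qb N k * qp k * qp (N - k)) * (1 - fps_X^(Suc (N-k)))
        + (qb N k' * qp k' * qp (Suc N - k)) * (fps_X^(Suc N - k) - fps_X^(Suc N - k) * fps_X^k)
      = qp N * (1 - fps_X^(Suc (N-k))) + qp N * (fps_X^(Suc (N-k)) - fps_X^(Suc N))"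
    unfolding IH1 IH2 xx unfolding e2 by (rule refl)
  also have "\<dots> = qp N * (1 - fps_X^(Suc N))"
    using gen_alg[of "qp N" "fps_X^(Suc (N-k))" "fps_X^(Suc N)"] .
  also have "\<dots> = qp (Suc N)" by (rule qp_Suc[symmetric])
  also have "\<dots> = qb (Suc N) k * c"
    unfolding c_def mult.assoc[symmetric] qb_prod[OF assms(2)] by (rule refl)
  finally have "(qb N k + fps_X^(Suc N - k) * qb N (k - 1)) * c = qb (Suc N) k * c" .
  then have "qb N k + fps_X^(Suc N - k) * qb N (k - 1) = qb (Suc N) k"
    using mult_right_cancel[OF cnz] by blast
  then show ?thesis by (rule sym)
qed


definition Tz :: "int \<Rightarrow> nat" where "Tz m = nat (m*(m-1) div 2)"

lemma Tz_nonneg: "0 \<le> m*(m-1::int)"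
  by (cases "m \<le> 0") (simp_all add: mult_nonpos_nonpos)

lemma Tz_int: "int (Tz m) = m*(m-1) div 2"
  using Tz_nonneg[of m] by (simp add: Tz_def)

lemma Tz_succ: "int (Tz (m+1)) = int (Tz m) + m"
proof -
  have "(m+1)*(m+1-1) = m*(m-1) + 2*m" by (simp add: algebra_simps)
  then have "(m+1)*(m+1-1) div 2 = m*(m-1) div 2 + m" by simp
  then show ?thesis by (simp add: Tz_int)
qed

lemma Tz0[simp]: "Tz 0 = 0" by (simp add: Tz_def)

definition LL :: "nat \<Rightarrow> nat \<Rightarrow> rat fps" where
  "LL N a = (\<Prod>j<N. 1 + fps_X^(nat \<bar>int j - int a\<bar>))"
definition RR :: "nat \<Rightarrow> nat \<Rightarrow> rat fps" where
  "RR N a = (\<Sum>k=0..N. qb N k * fps_X^(Tz (int k - int a)))"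

lemma claim_diag: "LL N N = RR N N"
proof (induction N)
  case 0
  then show ?case by (simp add: LL_def RR_def)
next
  case (Suc N)
  have L: "LL (Suc N) (Suc N) = (1 + fps_X^(Suc N)) * LL N N"
  proof -
    have "LL (Suc N) (Suc N) = (1 + fps_X^(nat \<bar>int 0 - int (Suc N)\<bar>)) * (\<Prod>i<N. 1 + fps_X^(nat \<bar>int (Suc i) - int (Suc N)\<bar>))"
      unfolding LL_def by (rule prod.lessThan_Suc_shift)
    also have "(\<Prod>i<N. 1 + fps_X^(nat \<bar>int (Suc i) - int (Suc N)\<bar>)) = LL N N"
      unfolding LL_def by (intro prod.cong refl arg_cong[where f="\<lambda>t. 1 + fps_X^(nat \<bar>t\<bar>)"]) simp
    also have "nat \<bar>int 0 - int (Suc N)\<bar> = Suc N" by simp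
    finally show ?thesis .
  qed
  have e1: "Tz (- int (Suc N)) = Suc N + Tz (- int N)"
    using Tz_succ[of "- int (Suc N)"] by simp
  have e2: "Suc N + Tz (int (Suc k) - int N) = Suc k + Tz (int k - int N)" for k
    using Tz_succ[of "int k - int N"] by (simp add: algebra_simps)
  have "RR (Suc N) (Suc N) = fps_X^(Tz (- int (Suc N)))
        + (\<Sum>k=0..N. qb (Suc N) (Suc k) * fps_X^(Tz (int k - int N)))"
    unfolding RR_def by (subst sum.atLeast0_atMost_Suc_shift) simp
  also have "(\<Sum>k=0..N. qb (Suc N) (Suc k) * fps_X^(Tz (int k - int N)))
      = RR N N + (\<Sum>k=0..N. fps_X^(Suc k + Tz (int k - int N)) * qb N (Suc k))"
  proof -
    have "qb (Suc N) (Suc k) * fps_X^(Tz (int k - int N)) = qb N k * fps_X^(Tz (int k - int N)) + fps_X^(Suc k + Tz (int k - int N)) * qb N (Suc k)" for k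
      by (simp only: qb.simps nat.distinct if_False diff_Suc_1 power_add distrib_right distrib_left mult_ac)
    then show ?thesis unfolding RR_def by (simp only: sum.distrib)
  qed
  also have "fps_X^(Tz (- int (Suc N))) + (RR N N + (\<Sum>k=0..N. fps_X^(Suc k + Tz (int k - int N)) * qb N (Suc k)))
      = RR N N + fps_X^(Suc N) * RR N N"
  proof -
    have "fps_X^(Suc N) * RR N N = (\<Sum>k=0..Suc N. fps_X^(Suc N + Tz (int k - int N)) * qb N k)"
      unfolding RR_def by (simp add: sum_distrib_left power_add mult_ac qb_gt)
    also have "\<dots> = fps_X^(Suc N + Tz (- int N)) + (\<Sum>k=0..N. fps_X^(Suc N + Tz (int (Suc k) - int N)) * qb N (Suc k))"
      by (subst sum.atLeast0_atMost_Suc_shift) simp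
    also have "\<dots> = fps_X^(Tz (- int (Suc N))) + (\<Sum>k=0..N. fps_X^(Suc k + Tz (int k - int N)) * qb N (Suc k))"
      by (simp only: e1 e2)
    finally show ?thesis by (simp add: algebra_simps)
  qed
  finally show ?case using L Suc.IH by (simp add: algebra_simps)
qed

lemma claim_up:
  assumes "a \<le> N" "LL N a = RR N a"
  shows "LL (Suc N) a = RR (Suc N) a"
proof -
  have L: "LL (Suc N) a = LL N a * (1 + fps_X^(N - a))"
    unfolding LL_def using assms(1) by (simp add: nat_diff_distrib)
  have e2: "(N - k) + Tz (int (Suc k) - int a) = (N - a) + Tz (int k - int a)" if "k \<le> N" for k
  proof -
    have "int (Tz (int (Suc k) - int a)) = int (Tz (int k - int a)) + (int k - int a)"
      using Tz_succ[of "int k - int a"] by (simp add: algebra_simps)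
    then show ?thesis using that assms(1) by linarith
  qed
  have "RR (Suc N) a = fps_X^(Tz (- int a))
        + (\<Sum>k=0..N. qb (Suc N) (Suc k) * fps_X^(Tz (int (Suc k) - int a)))"
    unfolding RR_def by (subst sum.atLeast0_atMost_Suc_shift) simp
  also have "(\<Sum>k=0..N. qb (Suc N) (Suc k) * fps_X^(Tz (int (Suc k) - int a)))
      = (\<Sum>k=0..N. qb N (Suc k) * fps_X^(Tz (int (Suc k) - int a)))
        + (\<Sum>k=0..N. fps_X^(N - a) * (qb N k * fps_X^(Tz (int k - int a))))"
  proof -
    have "qb (Suc N) (Suc k) * fps_X^(Tz (int (Suc k) - int a))
        = qb N (Suc k) * fps_X^(Tz (int (Suc k) - int a)) + fps_X^(N - a) * (qb N k * fps_X^(Tz (int k - int a)))"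
      if "k \<in> {0..N}" for k
    proof -
      have "qb (Suc N) (Suc k) = qb N (Suc k) + fps_X^(N - k) * qb N k"
        using pascal1[of "Suc k" N] that by simp
      moreover have "fps_X^(N - k) * fps_X^(Tz (int (Suc k) - int a)) = (fps_X^(N - a) * fps_X^(Tz (int k - int a)) :: rat fps)"
        using e2[of k] that by (simp add: power_add[symmetric])
      ultimately show ?thesis by (simp add: algebra_simps)
    qed
    then show ?thesis by (simp add: sum.distrib)
  qed
  also have "(\<Sum>k=0..N. fps_X^(N - a) * (qb N k * fps_X^(Tz (int k - int a)))) = fps_X^(N-a) * RR N a"
    unfolding RR_def by (simp add: sum_distrib_left)
  also have "fps_X^(Tz (- int a)) + ((\<Sum>k=0..N. qb N (Suc k) * fps_X^(Tz (int (Suc k) - int a))) + fps_X^(N-a) * RR N a)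
      = RR N a + fps_X^(N-a) * RR N a"
  proof -
    have "RR N a = (\<Sum>k=0..Suc N. qb N k * fps_X^(Tz (int k - int a)))"
      unfolding RR_def by (simp add: qb_gt)
    also have "\<dots> = fps_X^(Tz (- int a)) + (\<Sum>k=0..N. qb N (Suc k) * fps_X^(Tz (int (Suc k) - int a)))"
      by (subst sum.atLeast0_atMost_Suc_shift) simp
    finally show ?thesis by (simp add: algebra_simps)
  qed
  finally show ?thesis using L assms(2) by (simp add: algebra_simps)
qed

lemma claim_gen: "a \<le> N \<Longrightarrow> LL N a = RR N a"
proof (induction N)
  case 0 then show ?case using claim_diag[of 0] by simp
next
  case (Suc N)
  show ?case
  proof (cases "a = Suc N")
    case True then show ?thesis using claim_diag by simp
  next
    case False
    then have "a \<le> N" using Suc.prems by simp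
    then show ?thesis using claim_up Suc.IH by blast
  qed
qed


abbreviation EE :: "rat fps" where "EE \<equiv> qpoch 1"

lemma qp_eqm: "eqm (r+1) (qp r) EE"
  using qpoch_eqm[of 1 r] by (simp add: qp_fp eqm_sym)

lemma EE0: "EE $ 0 \<noteq> 0" by (simp add: qpoch0)

lemma stab:
  assumes "k \<le> N"
  shows "eqm (min k (N - k) + 1) (qb N k * EE) 1"
proof -
  let ?m = "min k (N - k) + 1"
  have a: "eqm ?m (qp k) EE" by (rule eqm_mono[OF qp_eqm]) simp
  have b: "eqm ?m (qp (N-k)) EE" by (rule eqm_mono[OF qp_eqm]) simp
  have c: "eqm ?m (qp N) EE" by (rule eqm_mono[OF qp_eqm]) simp
  have "eqm ?m (qb N k * qp k * qp (N-k)) (qb N k * EE * EE)"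
    by (intro eqm_mult eqm_refl a b)
  then have "eqm ?m (qb N k * EE * EE) EE"
    using qb_prod[OF assms] c by (metis eqm_sym eqm_trans)
  then have "eqm ?m (qb N k * EE * EE * inverse EE) (EE * inverse EE)"
    by (intro eqm_mult eqm_refl)
  moreover have "EE * inverse EE = 1" using EE0 by (rule inverse_mult_eq_1')
  ultimately show ?thesis by (simp add: mult.assoc)
qed

lemma Tz_bound:
  assumes "k \<le> 2*n"
  shows "n \<le> Tz (int k - int n) + min k (2*n - k) + 1"
proof -
  define m where "m = int k - int n"
  have T2: "2 * int (Tz m) = m*(m-1)"
    using Tz_int[of m] by (simp add: Tz_nonneg)
  have "m*(m-1) + 2 \<ge> 2*\<bar>m\<bar>"
  proof (cases "m \<ge> 0")
    case True
    have "(m-1)*(m-2) \<ge> 0"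
      by (cases "m \<le> 1") (simp_all add: mult_nonpos_nonpos)
    then show ?thesis using True by (simp add: algebra_simps)
  next
    case False
    have "0 \<le> m*(m+1)" using False by (intro mult_nonpos_nonpos) auto
    then show ?thesis using False by (simp add: algebra_simps)
  qed
  then have "int (Tz m) + 1 \<ge> \<bar>m\<bar>" using T2 by linarith
  moreover have "int (min k (2*n - k)) = int n - \<bar>m\<bar>" using assms unfolding m_def by auto
  ultimately show ?thesis unfolding m_def by linarith
qed

lemma sum_Xpow_nth:
  assumes "finite A"
  shows "(\<Sum>k\<in>A. fps_X^(e k) :: rat fps) $ d = of_nat (card {k\<in>A. e k = d})"
proof -
  have "(\<Sum>k\<in>A. fps_X^(e k) :: rat fps) $ d = (\<Sum>k\<in>A. if k \<in> {k\<in>A. e k = d} then 1 else 0)"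
    by (simp add: fps_sum_nth fps_X_power_nth eq_commute)
  also have "\<dots> = (\<Sum>k\<in>A \<inter> {k\<in>A. e k = d}. 1)"
    by (rule sum.inter_restrict[symmetric]) (rule assms)
  also have "A \<inter> {k\<in>A. e k = d} = {k\<in>A. e k = d}" by auto
  finally show ?thesis by simp
qed

lemma T8: "8 * int (Tz m) + 1 = (2*m - 1)^2"
proof -
  have "2 * int (Tz m) = m*(m-1)"
    using Tz_int[of m] by (simp add: Tz_nonneg)
  then show ?thesis by (simp add: power2_eq_square algebra_simps)
qed

lemma card_Tz:
  assumes "d < n"
  shows "card {k\<in>{0..2*n}. Tz (int k - int n) = d} = (if istri d then 2 else 0)"
proof (cases "istri d")
  case True
  then obtain w where w: "0 < w" "w^2 = 8 * int d + 1" using istri_int by blast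
  have ow: "odd w"
  proof
    assume "even w" then have "even (w^2)" by simp
    then show False using w(2) by simp
  qed
  then obtain r where "w = 2*r + 1" by (elim oddE)
  then obtain h where h: "w = 2*h - 1" by (intro that[of "r+1"]) simp
  have h1: "1 \<le> h" using h w(1) by simp
  have "w < 2 * int n"
  proof (rule ccontr)
    assume "\<not> w < 2 * int n"
    then have "2 * int n \<le> w" by simp
    then have A: "(2*int n)^2 \<le> 8*int d + 1" using w(2) by (metis power_mono zero_le_mult_iff zero_le_numeral of_nat_0_le_iff)
    have B: "8*int d + 1 \<le> 8*int n - 7" using assms by simp
    have C: "0 \<le> (2*int n - 2)^2" by simp
    show False using A B C unfolding power2_eq_square by (simp add: algebra_simps)
  qed
  then have hn: "h \<le> int n" using h by simp
  have eq: "Tz m = d \<longleftrightarrow> m = h \<or> m = 1 - h" for m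
  proof -
    have "Tz m = d \<longleftrightarrow> 8 * int (Tz m) + 1 = 8 * int d + 1" by simp
    also have "\<dots> \<longleftrightarrow> (2*m-1)^2 = w^2" using T8[of m] w(2) by simp
    also have "\<dots> \<longleftrightarrow> 2*m-1 = w \<or> 2*m-1 = -w" by (simp add: power2_eq_iff)
    also have "\<dots> \<longleftrightarrow> m = h \<or> m = 1 - h" using h by auto
    finally show ?thesis .
  qed
  have "{k\<in>{0..2*n}. Tz (int k - int n) = d} = {nat (int n + h), nat (int n + 1 - h)}"
  proof
    show "{k\<in>{0..2*n}. Tz (int k - int n) = d} \<subseteq> {nat (int n + h), nat (int n + 1 - h)}"
      using eq by force
    show "{nat (int n + h), nat (int n + 1 - h)} \<subseteq> {k\<in>{0..2*n}. Tz (int k - int n) = d}"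
      using eq h1 hn by auto
  qed
  moreover have "nat (int n + h) \<noteq> nat (int n + 1 - h)" using h1 hn by simp
  ultimately show ?thesis using True by simp
next
  case False
  have "{k\<in>{0..2*n}. Tz (int k - int n) = d} = {}"
  proof (rule ccontr)
    assume "{k\<in>{0..2*n}. Tz (int k - int n) = d} \<noteq> {}"
    then obtain k where k: "Tz (int k - int n) = d" by auto
    let ?w = "\<bar>2*(int k - int n) - 1\<bar>"
    have "?w^2 = 8 * int d + 1" using T8[of "int k - int n"] k by simp
    moreover have "0 < ?w" by presburger
    ultimately have "istri d" unfolding istri_int by blast
    then show False using False by simp
  qed
  then show ?thesis using False by simp
qed


definition Cn :: "nat \<Rightarrow> rat fps" where "Cn n = (\<Prod>i\<in>{1..<n}. 1 + fps_X^i)"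

lemma LL_decomp:
  assumes "1 \<le> n"
  shows "LL (2*n) n = fps_const 2 * (1 + fps_X^n) * (Cn n)^2"
proof -
  define f where "f j = (1 + fps_X^(nat \<bar>int j - int n\<bar>) :: rat fps)" for j
  have "LL (2*n) n = (\<Prod>j\<in>{..<n} \<union> {n..<2*n}. f j)"
    unfolding LL_def f_def by (intro prod.cong refl) auto
  also have "\<dots> = (\<Prod>j\<in>{..<n}. f j) * (\<Prod>j\<in>{n..<2*n}. f j)"
    by (rule prod.union_disjoint) auto
  also have "(\<Prod>j\<in>{..<n}. f j) = (\<Prod>i\<in>{1..n}. 1 + fps_X^i)"
    by (rule prod.reindex_bij_witness[where i="\<lambda>b. n - b" and j="\<lambda>a. n - a"])
       (auto simp: f_def)
  also have "\<dots> = (\<Prod>i\<in>insert n {1..<n}. 1 + fps_X^i)"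
    using assms by (intro prod.cong refl) auto
  also have "\<dots> = (1 + fps_X^n) * Cn n" by (simp add: Cn_def)
  also have "(\<Prod>j\<in>{n..<2*n}. f j) = (\<Prod>i\<in>{0..<n}. f (i + n))"
    using prod.shift_bounds_nat_ivl[of f 0 n n] by (simp add: mult_2)
  also have "\<dots> = (\<Prod>i\<in>insert 0 {1..<n}. 1 + fps_X^i)"
    using assms by (intro prod.cong) (auto simp: f_def)
  also have "\<dots> = fps_const 2 * Cn n"
    by (simp add: Cn_def numeral_fps_const[symmetric] one_add_one)
  finally show ?thesis by (simp add: power2_eq_square mult_ac)
qed

lemma I1_rat:
  assumes "d < n"
  shows "((Cn n)^2 * EE) $ d = (if istri d then 1 else 0)"
proof -
  have n1: "1 \<le> n" using assms by simp
  have A: "eqm n (LL (2*n) n * EE) (fps_const 2 * (Cn n)^2 * EE)"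
  proof -
    have "eqm n (fps_const 2 * (1 + fps_X^n) * (Cn n)^2 * EE) (fps_const 2 * 1 * (Cn n)^2 * EE)"
      using n1 by (intro eqm_mult eqm_refl eqm_Xpow_one') simp_all
    then show ?thesis by (simp add: LL_decomp[OF n1])
  qed
  have B: "eqm n (RR (2*n) n * EE) (\<Sum>k=0..2*n. fps_X^(Tz (int k - int n)))"
  proof -
    have "RR (2*n) n * EE = (\<Sum>k=0..2*n. fps_X^(Tz (int k - int n)) * (qb (2*n) k * EE))"
      unfolding RR_def sum_distrib_right by (simp add: mult_ac)
    moreover have "eqm n (\<Sum>k=0..2*n. fps_X^(Tz (int k - int n)) * (qb (2*n) k * EE))
                         (\<Sum>k=0..2*n. fps_X^(Tz (int k - int n)) * 1)"
    proof (rule eqm_sum)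
      fix k assume k: "k \<in> {0..2*n}"
      then have "eqm (min k (2*n - k) + 1 + Tz (int k - int n))
          (fps_X^(Tz (int k - int n)) * (qb (2*n) k * EE)) (fps_X^(Tz (int k - int n)) * 1)"
        by (intro eqm_shift stab) simp
      then show "eqm n (fps_X^(Tz (int k - int n)) * (qb (2*n) k * EE)) (fps_X^(Tz (int k - int n)) * 1)"
        by (rule eqm_mono) (use Tz_bound[of k n] k in simp)
    qed
    ultimately show ?thesis by simp
  qed
  have C: "LL (2*n) n = RR (2*n) n" by (rule claim_gen) simp
  have "(fps_const 2 * (Cn n)^2 * EE) $ d = (\<Sum>k=0..2*n. fps_X^(Tz (int k - int n)) :: rat fps) $ d"
    using eqm_nth[OF A assms] eqm_nth[OF B assms] C by simp
  also have "\<dots> = of_nat (card {k\<in>{0..2*n}. Tz (int k - int n) = d})"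
    by (rule sum_Xpow_nth) simp
  also have "\<dots> = (if istri d then 2 else 0)" using card_Tz[OF assms] by simp
  finally have "2 * ((Cn n)^2 * EE) $ d = (if istri d then 2 else 0)"
    by (simp add: mult.assoc)
  then show ?thesis by (auto split: if_splits)
qed

lemma bit_fps_minus: "(f::bit fps) - g = f + g"
  by (rule fps_ext) simp

lemma isint_Cn: "isint (Cn n)"
  unfolding Cn_def by (intro isint_prod isint_add isint_1 isint_Xpow)

lemma red_Cn: "1 \<le> n \<Longrightarrow> red (Cn n) = fp 1 (n - 1)"
proof -
  assume n: "1 \<le> n"
  have "red (Cn n) = (\<Prod>i\<in>{1..<n}. 1 + fps_X^i)"
    unfolding Cn_def by (simp add: red_prod red_add isint_add isint_1 isint_Xpow)
  also have "\<dots> = (\<Prod>i\<in>{1..n-1}. 1 - fps_X^(1*i))"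
    using n by (intro prod.cong) (auto simp: bit_fps_minus)
  finally show ?thesis by (simp add: fp_def)
qed

lemma red_fp: "red (fp 1 N) = (fp 1 N :: bit fps)"
  unfolding fp_def by (simp add: red_prod red_diff isint_diff isint_1 isint_Xpow)

lemma I1: "red EE ^ 3 = psi"
proof (rule fps_ext)
  fix d :: nat
  define n where "n = d + 1"
  have dn: "d < n" "1 \<le> n" by (simp_all add: n_def)
  define F where "F = (fp 1 (n - 1) :: bit fps)"
  have e1: "eqm n (red EE) F"
    using red_eqm[OF qpoch_eqm[of 1 "n-1"]] dn red_fp unfolding F_def by simp
  have "red ((Cn n)^2 * EE) = red (Cn n) ^ 2 * red EE"
    by (simp add: red_mult red_power isint_power isint_Cn isint_qpoch)
  also have "\<dots> = F^2 * red EE" using red_Cn[OF dn(2)] by (simp add: F_def)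
  finally have r: "red ((Cn n)^2 * EE) = F^2 * red EE" .
  have "eqm n (F^2 * red EE) (F^2 * F)" by (intro eqm_mult eqm_refl e1)
  moreover have "eqm n (red EE ^ 3) (F^3)" by (intro eqm_power e1)
  ultimately have "(red EE ^ 3) $ d = (F^2 * red EE) $ d"
    using dn by (simp add: eqm_def power_Suc2 power2_eq_square power3_eq_cube)
  also have "\<dots> = red ((Cn n)^2 * EE) $ d" by (simp only: r)
  also have "\<dots> = psi $ d" using I1_rat[OF dn(1)] by (simp add: red_nth psi_def)
  finally show "(red EE ^ 3) $ d = psi $ d" .
qed


lemma sq_mod3: "(x::nat)^2 mod 3 = (if x mod 3 = 0 then 0 else 1)"
proof -
  have "x^2 mod 3 = (x mod 3)^2 mod 3" by (simp add: power_mod)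
  moreover have "x mod 3 < 3" by simp
  ultimately show ?thesis
    by (cases "x mod 3"; cases "x mod 3 - 1"; simp add: power2_eq_square)
qed

lemma not_istri_mod3: "n mod 3 = 2 \<Longrightarrow> \<not> istri n"
proof
  assume n: "n mod 3 = 2" and "istri n"
  then obtain x where x: "x^2 = 8*n+1" by (auto simp: istri_def)
  have "(8*n+1) mod 3 = 2" using n by presburger
  then show False using x sq_mod3[of x] by (simp split: if_splits)
qed

lemma istri_mod3_1:
  assumes "n = 3*m+1"
  shows "istri n \<longleftrightarrow> 3 dvd m \<and> istri (m div 3)"
proof
  assume "istri n"
  then obtain x where x: "x^2 = 8*n+1" by (auto simp: istri_def)
  have "(8*n+1) mod 3 = 0" using assms by presburger
  then have "x mod 3 = 0" using x sq_mod3[of x] by (simp split: if_splits)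
  then obtain z where z: "x = 3*z" by (auto elim!: dvdE simp: mod_eq_0_iff_dvd)
  then have "9*z^2 = 24*m+9" using x assms by (simp add: power2_eq_square)
  then have z2: "z^2 = (8*m+3) div 3" by simp
  have "3*z^2 = 8*m+3" using \<open>9*z^2 = 24*m+9\<close> by simp
  then have "3 dvd m" by presburger
  then obtain j where j: "m = 3*j" by (elim dvdE)
  then have "z^2 = 8*j+1" using \<open>3*z^2 = 8*m+3\<close> by simp
  then show "3 dvd m \<and> istri (m div 3)" using j by (auto simp: istri_def)
next
  assume "3 dvd m \<and> istri (m div 3)"
  then obtain j z where j: "m = 3*j" and z: "z^2 = 8*j+1" by (auto simp: istri_def elim!: dvdE)
  have "(3*z)^2 = 8*n+1" using j z assms by (simp add: power_mult_distrib)
  then show "istri n" unfolding istri_def by (rule exI)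
qed

lemma psi_dissect:
  "psi = (Abs_fps (\<lambda>n. psi $ (3*n)) oo fps_X^3) + fps_X * ((psi oo fps_X^3) oo fps_X^3)"
proof (rule fps_ext)
  fix n :: nat
  have c9: "(psi oo fps_X^3) oo fps_X^3 = psi oo fps_X^9" by (simp add: compose_Xpow_Xpow)
  consider (a) "n mod 3 = 0" | (b) "n mod 3 = 1" | (c) "n mod 3 = 2" by linarith
  then show "psi $ n = ((Abs_fps (\<lambda>n. psi $ (3*n)) oo fps_X^3) + fps_X * ((psi oo fps_X^3) oo fps_X^3)) $ n"
  proof cases
    case a
    then have "3 dvd n" "n = 0 \<or> \<not> 9 dvd (n - 1)" by presburger+
    then show ?thesis using a unfolding c9 by (auto simp: compose_Xpow_nth)
  next
    case b
    have "n = 3*(n div 3)+1" using b div_mult_mod_eq[of n 3] by linarith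
    then obtain m where m: "n = 3*m+1" by blast
    have "\<not> 3 dvd n" "n \<noteq> 0" using m by presburger+
    moreover have "9 dvd (n - 1) \<longleftrightarrow> 3 dvd m" using m by presburger
    moreover have "(n - 1) div 9 = m div 3" using m by simp
    ultimately show ?thesis using istri_mod3_1[OF m] unfolding c9
      by (auto simp: compose_Xpow_nth psi_def)
  next
    case c
    then have "\<not> 3 dvd n" "\<not> 9 dvd (n - 1)" by presburger+
    then show ?thesis using not_istri_mod3[OF c] unfolding c9
      by (auto simp: compose_Xpow_nth psi_def)
  qed
qed

lemma bit_of_int: "(of_int z :: bit) = (if even z then 0 else 1)"
proof -
  have "z = 2 * (z div 2) + z mod 2" by simp
  then have "(of_int z :: bit) = of_int (2 * (z div 2)) + of_int (z mod 2)" by (metis of_int_add)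
  also have "(of_int (2 * (z div 2)) :: bit) = 0" by simp
  also have "z mod 2 = (if even z then 0 else 1)" by (simp add: even_iff_mod_2_eq_zero odd_iff_mod_2_eq_one)
  finally show ?thesis by (auto split: if_splits)
qed

lemma isint_j6: "isint j6_series"
proof -
  have isB: "isint (qpoch 1 * qpoch 6 ^ 3)" by (intro isint_mult isint_power isint_qpoch)
  have B0: "(qpoch 1 * qpoch 6 ^ 3) $ 0 = 1" by (simp add: qpoch0 fps_power_zeroth)
  show ?thesis unfolding j6_series_def
    by (intro isint_mult isint_power isint_qpoch isint_inverse isB B0)
qed

lemma istri_scale:
  fixes p k n n' :: nat
  assumes "8*n'+1 = p^(2*k)*(8*n+1)" "p > 0"
  shows "istri n' \<longleftrightarrow> istri n"
proof
  assume "istri n'"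
  then obtain y where y: "y^2 = p^(2*k)*(8*n+1)" using assms(1) by (auto simp: istri_def)
  have "(p^k)^2 dvd y^2" using y by (simp add: power_mult[symmetric] mult.commute)
  then have "p^k dvd y" by simp
  then obtain z where z: "y = p^k * z" by (elim dvdE)
  then have "(p^k)^2 * z^2 = (p^k)^2 * (8*n+1)" using y by (simp add: power_mult_distrib power_mult[symmetric] mult.commute)
  moreover have "(p^k)^2 \<noteq> 0" using assms(2) by simp
  ultimately have "z^2 = 8*n+1" by (metis mult_left_cancel)
  then show "istri n" by (auto simp: istri_def)
next
  assume "istri n"
  then obtain z where z: "z^2 = 8*n+1" by (auto simp: istri_def)
  have "(p^k*z)^2 = 8*n'+1" using z assms(1) by (simp add: power_mult_distrib power_mult[symmetric] mult.commute)
  then show "istri n'" unfolding istri_def by (rule exI)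
qed

theorem corollary3p7_cond:
  fixes k p :: nat
  assumes I1: "red (qpoch 1) ^ 3 = psi"
  assumes I2: "psi * (psi oo fps_X^3) = (psi oo fps_X^4) + fps_X * (psi oo fps_X^12)"
  assumes "k > 0" and "prime p" and "p mod 8 \<in> {3, 5, 7}"
  shows "\<forall>n::nat. \<exists>m::int.
           J6 (24 * n + 3) - J6 (3 * p ^ (2 * k) * (8 * n + 1)) = of_int (2 * m)"
proof
  fix n :: nat
  have ma: "red j6_series $ (3*(8*N+1)+1) = psi $ N" for N
    by (rule main_alg[OF I1 I2 psi_dissect])
  have "p mod 8 = 3 \<or> p mod 8 = 5 \<or> p mod 8 = 7" using assms(5) by simp
  then have podd: "odd p" by presburger
  obtain r where r: "p = 2*r+1" using podd by (elim oddE)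
  have "even (r*(r+1))" by simp
  then obtain s where s: "r*(r+1) = 2*s" by (elim evenE)
  have "p^2 = 8*s+1" unfolding r using s by (simp add: power2_eq_square algebra_simps)
  then have p2: "p^2 mod 8 = 1" by simp
  have "(p^2)^k mod 8 = ((p^2 mod 8)^k) mod 8" by (simp only: power_mod)
  then have "(p^2)^k mod 8 = 1" using p2 by simp
  then have pk: "p^(2*k) mod 8 = 1" by (simp add: power_mult)
  define M where "M = p^(2*k)*(8*n+1)"
  have "M mod 8 = ((p^(2*k) mod 8) * ((8*n+1) mod 8)) mod 8" unfolding M_def by (simp only: mod_mult_eq)
  then have "M mod 8 = 1" using pk by simp
  then have n': "M = 8*(M div 8)+1" using div_mult_mod_eq[of M 8] by linarith
  define n' where "n' = M div 8"
  have n'': "M = 8*n'+1" using n' n'_def by simp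
  have ppos: "p > 0" using podd by (intro odd_pos)
  have tri: "istri n' \<longleftrightarrow> istri n"
    by (rule istri_scale[of n' p k n]) (use n'' M_def ppos in auto)
  have A: "J6 (24 * n + 3) = j6_series $ (3*(8*n+1)+1)" by (simp add: J6_def)
  have B: "J6 (3 * p ^ (2 * k) * (8 * n + 1)) = j6_series $ (3*(8*n'+1)+1)"
  proof -
    have "3 * p ^ (2 * k) * (8 * n + 1) = 3*(8*n'+1)" using n'' M_def by simp
    then show ?thesis by (simp add: J6_def)
  qed
  have eqb: "red j6_series $ (3*(8*n+1)+1) = red j6_series $ (3*(8*n'+1)+1)"
    using ma[of n] ma[of n'] tri by (simp add: psi_def)
  define u where "u = \<lfloor>j6_series $ (3*(8*n+1)+1)\<rfloor>"
  define v where "v = \<lfloor>j6_series $ (3*(8*n'+1)+1)\<rfloor>"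
  have uu: "j6_series $ (3*(8*n+1)+1) = of_int u" unfolding u_def using isint_nth[OF isint_j6] by simp
  have vv: "j6_series $ (3*(8*n'+1)+1) = of_int v" unfolding v_def using isint_nth[OF isint_j6] by simp
  have "(of_int u :: bit) = of_int v" using eqb by (simp add: red_nth u_def v_def)
  then have "even u = even v" by (simp add: bit_of_int split: if_splits)
  then have "even (u - v)" by simp
  then obtain m where "u - v = 2*m" by (elim evenE)
  then show "\<exists>m::int. J6 (24 * n + 3) - J6 (3 * p ^ (2 * k) * (8 * n + 1)) = of_int (2 * m)"
    using A B uu vv by (intro exI[of _ m]) (simp flip: of_int_diff)
qed


theorem corollary3p7:
  fixes k p :: nat
  assumes "k > 0" and "prime p" and "p mod 8 \<in> {3, 5, 7}"
  shows "\<forall>n::nat. \<exists>m::int.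
           J6 (24 * n + 3) - J6 (3 * p ^ (2 * k) * (8 * n + 1)) = of_int (2 * m)"
  using corollary3p7_cond[OF I1 I2 assms] .

end
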